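(* Let $\eta$ be a Schwartz function on $\mathbb{R}$ and $\varphi$ the fixed cutoff. For $\tau,\lambda\in\mathbb{R}$ and $\Phi\in\mathbb{Z}\setminus\{0\}$ define $$K_G(\tau,\lambda,\Phi)=\int_{\mathbb{R}}\Big(\widehat\varphi(\tau-\mu)\widehat\varphi(\mu-\lambda)\frac1\Phi\mathcal{H}\widehat\eta\Big(\frac\mu\Phi\Big)+\widehat\varphi(\tau-\mu)\,\mathcal{H}\widehat\varphi(\mu-\lambda)\frac1\Phi\widehat\eta\Big(\frac\mu\Phi\Big)\Big)d\mu.$$ Then for every sufficiently large $\alpha>0$, uniformly in $\tau,\lambda,\Phi$, $$|K_G(\tau,\lambda,\Phi)|\lesssim_{\alpha,\varphi,\eta}\frac1{\langle\tau-\lambda\rangle^\alpha}\min\Big(\frac1{\langle\Phi\rangle},\frac1{\langle\lambda\rangle}\Big)+\frac1{\langle\tau-\lambda\rangle}\min\Big(\frac1{\langle\Phi\rangle},\frac1{\langle\tau\rangle}\Big)\lesssim\frac1{\langle\tau-\lambda\rangle}\min\Big(\frac1{\langle\Phi\rangle},\frac1{\langle\tau\rangle}\Big).$$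
   Context: $\langle x\rangle=(1+|x|^2)^{1/2}$; $\widehat{\ }$ denotes the Fourier transform on $\mathbb{R}$, $\widehat f(\tau)=\frac1{2\pi}\int f(t)e^{-it\tau}dt$. $\varphi:\mathbb{R}\to\mathbb{R}$ is a fixed smooth cutoff equal to $1$ on $[-1,1]$ and $0$ outside $[-2,2]$. $\mathcal{H}$ is the Hilbert transform, i.e. principal value convolution with $\frac1\tau$: $\mathcal{H}f(\xi)=\mathrm{p.v.}\int_{\mathbb{R}}\frac{f(\xi-\mu)}{\mu}d\mu$. (This kernel describes, after the shift $\tau\mapsto\tau-n^3$, $\lambda\mapsto\lambda-n^3$, the space-time Fourier transform of the Duhamel-type operator $\int_0^te^{i(t-t')n^3}\eta(\Phi(t-t'))\varphi(t')(\cdot)dt'$ multiplied by $\varphi(t)$.) *)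

theory Defs
  imports "HOL-Analysis.Analysis"
begin

definition jbr :: "real \<Rightarrow> real" where
  "jbr x = sqrt (1 + x\<^sup>2)"

fun iter_deriv :: "nat \<Rightarrow> (real \<Rightarrow> 'a::real_normed_vector) \<Rightarrow> real \<Rightarrow> 'a" where
  "iter_deriv 0 f = f"
| "iter_deriv (Suc k) f = (\<lambda>x. vector_derivative (iter_deriv k f) (at x))"

definition smooth_real :: "(real \<Rightarrow> 'a::real_normed_vector) \<Rightarrow> bool" where
  "smooth_real f \<longleftrightarrow> (\<forall>k x. iter_deriv k f differentiable (at x))"

definition schwartz :: "(real \<Rightarrow> complex) \<Rightarrow> bool" where
  "schwartz f \<longleftrightarrow> smooth_real f \<and>
     (\<forall>m k. \<exists>C. \<forall>x. \<bar>x\<bar> ^ m * norm (iter_deriv k f x) \<le> C)"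

definition cutoff :: "(real \<Rightarrow> real) \<Rightarrow> bool" where
  "cutoff \<phi> \<longleftrightarrow> smooth_real \<phi> \<and> (\<forall>t. \<bar>t\<bar> \<le> 1 \<longrightarrow> \<phi> t = 1)
      \<and> (\<forall>t. \<bar>t\<bar> > 2 \<longrightarrow> \<phi> t = 0)"

definition fourier :: "(real \<Rightarrow> complex) \<Rightarrow> real \<Rightarrow> complex" where
  "fourier f \<tau> = (LINT t|lborel. f t * cis (- (t * \<tau>))) / complex_of_real (2 * pi)"

definition hilbert :: "(real \<Rightarrow> complex) \<Rightarrow> real \<Rightarrow> complex" where
  "hilbert f \<xi> = Lim (at_right 0)
     (\<lambda>\<epsilon>. LINT \<mu>|lborel. indicator {\<mu>. \<epsilon> < \<bar>\<mu>\<bar>} \<mu> *\<^sub>R (f (\<xi> - \<mu>) / complex_of_real \<mu>))"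

definition KG :: "(real \<Rightarrow> real) \<Rightarrow> (real \<Rightarrow> complex) \<Rightarrow> real \<Rightarrow> real \<Rightarrow> int \<Rightarrow> complex" where
  "KG \<phi> \<eta> \<tau> lam \<Phi> =
     (LINT \<mu>|lborel.
        fourier (\<lambda>t. complex_of_real (\<phi> t)) (\<tau> - \<mu>)
          * fourier (\<lambda>t. complex_of_real (\<phi> t)) (\<mu> - lam)
          * (1 / of_int \<Phi>) * hilbert (fourier \<eta>) (\<mu> / of_int \<Phi>)
      + fourier (\<lambda>t. complex_of_real (\<phi> t)) (\<tau> - \<mu>)
          * hilbert (fourier (\<lambda>t. complex_of_real (\<phi> t))) (\<mu> - lam)
          * (1 / of_int \<Phi>) * fourier \<eta> (\<mu> / of_int \<Phi>))"

end

theory Submission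
  imports Defs "HOL-Probability.Sinc_Integral" "HOL-Real_Asymp.Real_Asymp"
begin


lemma jbr_ge1: "jbr x \<ge> 1" unfolding jbr_def by simp
lemma jbr_pos: "jbr x > 0" using jbr_ge1[of x] by linarith
lemma jbr_sq: "(jbr x)\<^sup>2 = 1 + x\<^sup>2" unfolding jbr_def by (simp add: add_pos_nonneg)
lemma jbr_peetre: "jbr (a + b) \<le> 2 * jbr a * jbr b"
proof -
  have "1 + (a+b)\<^sup>2 \<le> 4 * (1 + a\<^sup>2) * (1 + b\<^sup>2)"
  proof -
    have e: "4 * (1 + a\<^sup>2) * (1 + b\<^sup>2) - (1 + (a+b)\<^sup>2) = 3 + (a-b)\<^sup>2 + 2*a\<^sup>2 + 2*b\<^sup>2 + 4*(a*b)\<^sup>2"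
      by (simp add: power2_eq_square algebra_simps)
    have "0 \<le> 3 + (a-b)\<^sup>2 + 2*a\<^sup>2 + 2*b\<^sup>2 + 4*(a*b)\<^sup>2" by (intro add_nonneg_nonneg) auto
    with e show ?thesis by linarith
  qed
  hence "sqrt (1 + (a+b)\<^sup>2) \<le> sqrt (4 * (1 + a\<^sup>2) * (1 + b\<^sup>2))" by (rule real_sqrt_le_mono)
  also have "\<dots> = sqrt 4 * jbr a * jbr b" unfolding jbr_def by (simp only: real_sqrt_mult)
  also have "sqrt 4 = (2::real)" by (simp add: real_sqrt_unique)
  finally show ?thesis by (simp add: jbr_def)
qed

lemma integrable_inv_sq: "integrable lborel (\<lambda>x::real. inverse (1 + x\<^sup>2))"
  using integrable_inverse_1_plus_square
  by (simp add: set_integrable_def einterval_def)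

lemma integral_inv_sq: "(LINT x|lborel. inverse (1 + x\<^sup>2)) = pi"
  using LBINT_inverse_1_plus_square
  by (simp add: interval_lebesgue_integral_def set_lebesgue_integral_def einterval_def)



lemma cis_lip: "norm (cis x - cis y) \<le> \<bar>x - y\<bar>"
proof -
  have "(norm (cis x - cis y))\<^sup>2 = (cos x - cos y)\<^sup>2 + (sin x - sin y)\<^sup>2"
    by (simp add: cmod_power2)
  also have "\<dots> = 4 * (sin ((x - y) / 2))\<^sup>2 * ((sin ((x + y) / 2))\<^sup>2 + (cos ((x + y) / 2))\<^sup>2)"
  proof -
    have m: "sin ((y - x) / 2) = - sin ((x - y) / 2)"
      by (metis minus_diff_eq minus_divide_left sin_minus)
    show ?thesis unfolding cos_diff_cos sin_diff_sin m by algebra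
  qed
  also have "\<dots> = (2 * sin ((x - y) / 2))\<^sup>2" by (simp add: power_mult_distrib)
  finally have "norm (cis x - cis y) = \<bar>2 * sin ((x - y) / 2)\<bar>"
    by (metis abs_norm_cancel real_sqrt_abs)
  also have "\<dots> \<le> 2 * \<bar>(x - y) / 2\<bar>" using abs_sin_x_le_abs_x[of "(x-y)/2"] by (simp add: abs_mult)
  finally show ?thesis by simp
qed

lemma meas_cis: "(\<lambda>t::real. cis (- (t * a))) \<in> borel_measurable borel"
  by (intro borel_measurable_continuous_onI continuous_intros)

lemma integrable_mult_cis:
  assumes "integrable lborel (f :: real \<Rightarrow> complex)"
  shows "integrable lborel (\<lambda>t. f t * cis (- (t * a)))"
proof (rule Bochner_Integration.integrable_bound[OF assms])
  show "(\<lambda>t. f t * cis (- (t * a))) \<in> borel_measurable lborel"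
    using assms meas_cis[of a] by (auto intro!: borel_measurable_times dest: borel_measurable_integrable)
qed (auto simp: norm_mult)

lemma fourier_bound: "norm (fourier f a) \<le> (LINT t|lborel. norm (f t)) / (2*pi)"
proof -
  have "norm (LINT t|lborel. f t * cis (- (t * a))) \<le> (LINT t|lborel. norm (f t * cis (- (t * a))))"
    by (rule integral_norm_bound)
  also have "\<dots> = (LINT t|lborel. norm (f t))" by (simp add: norm_mult)
  finally show ?thesis unfolding fourier_def norm_divide by (simp add: divide_right_mono)
qed

lemma fourier_lip:
  assumes "integrable lborel f" "integrable lborel (\<lambda>t. t *\<^sub>R f t)"
  shows "norm (fourier f a - fourier f b) \<le> \<bar>a - b\<bar> * (LINT t|lborel. norm (t *\<^sub>R f t)) / (2*pi)"
proof -
  have "fourier f a - fourier f b = (LINT t|lborel. f t * cis (- (t * a)) - f t * cis (- (t * b))) / complex_of_real (2*pi)"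
    unfolding fourier_def
    by (simp add: Bochner_Integration.integral_diff[OF integrable_mult_cis[OF assms(1)] integrable_mult_cis[OF assms(1)]] diff_divide_distrib)
  hence "norm (fourier f a - fourier f b) = norm (LINT t|lborel. f t * cis (- (t * a)) - f t * cis (- (t * b))) / (2*pi)"
    by (simp add: norm_divide)
  also have "norm (LINT t|lborel. f t * cis (- (t * a)) - f t * cis (- (t * b))) \<le> (LINT t|lborel. norm (f t * cis (- (t * a)) - f t * cis (- (t * b))))"
    by (rule integral_norm_bound)
  also have "\<dots> \<le> (LINT t|lborel. \<bar>a - b\<bar> * norm (t *\<^sub>R f t))"
  proof (rule integral_mono)
    show "integrable lborel (\<lambda>t. norm (f t * cis (- (t * a)) - f t * cis (- (t * b))))"
      using integrable_mult_cis[OF assms(1)] by auto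
    show "integrable lborel (\<lambda>t. \<bar>a - b\<bar> * norm (t *\<^sub>R f t))" by (intro integrable_mult_right integrable_norm assms(2))
    fix t
    have "norm (f t * cis (- (t * a)) - f t * cis (- (t * b))) = norm (f t) * norm (cis (- (t * a)) - cis (- (t * b)))"
      by (simp add: norm_mult[symmetric] right_diff_distrib)
    also have "\<dots> \<le> norm (f t) * \<bar>(- (t * a)) - (- (t * b))\<bar>" by (intro mult_left_mono cis_lip) auto
    also have "\<dots> = \<bar>a - b\<bar> * norm (t *\<^sub>R f t)"
      using abs_mult[of t "b - a"] by (simp add: algebra_simps abs_minus_commute)
    finally show "norm (f t * cis (- (t * a)) - f t * cis (- (t * b))) \<le> \<bar>a - b\<bar> * norm (t *\<^sub>R f t)" .
  qed
  also have "\<dots> = \<bar>a - b\<bar> * (LINT t|lborel. norm (t *\<^sub>R f t))" by simp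
  finally show ?thesis by (simp add: divide_right_mono)
qed

lemma cis_deriv: "((\<lambda>t. cis (- (t * a))) has_vector_derivative (of_real (-a) * (\<i> * cis (- (t * a))))) (at t)"
proof -
  have "((\<lambda>t. - (t * a)) has_derivative (\<lambda>h. - (h * a))) (at t)"
    by (auto intro!: derivative_eq_intros)
  from has_derivative_cis[OF this]
  show ?thesis unfolding has_vector_derivative_def
    by (simp add: scaleR_conv_of_real algebra_simps)
qed

lemma fourier_deriv:
  fixes f f' :: "real \<Rightarrow> complex"
  assumes D: "\<And>t. (f has_vector_derivative f' t) (at t)"
    and C: "\<And>t. isCont f' t"
    and I: "integrable lborel f" "integrable lborel f'"
    and L: "(f \<longlongrightarrow> 0) at_top" "(f \<longlongrightarrow> 0) at_bot"
  shows "fourier f' a = \<i> * of_real a * fourier f a"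
proof -
  define G where "G t = f' t * cis (- (t * a)) - \<i> * of_real a * (f t * cis (- (t * a)))" for t
  have Gi: "integrable lborel G"
    unfolding G_def using integrable_mult_cis[OF I(1)] integrable_mult_cis[OF I(2)] by auto
  have "(LBINT t=-\<infinity>..\<infinity>. G t) = 0 - 0"
  proof (rule interval_integral_FTC_integrable[where F = "\<lambda>t. f t * cis (- (t * a))"])
    fix x
    show "((\<lambda>t. f t * cis (- (t * a))) has_vector_derivative G x) (at x)"
      using has_vector_derivative_mult[OF D[of x] cis_deriv[of a x]]
      unfolding G_def by (simp add: algebra_simps)
    have "isCont f x" using D[of x] by (metis has_vector_derivative_continuous)
    moreover have "isCont (\<lambda>t. cis (- (t * a))) x" by (metis cis_deriv has_vector_derivative_continuous)
    ultimately show "isCont G x" unfolding G_def using C[of x] by (auto intro!: continuous_intros)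
  next
    show "set_integrable lborel (einterval (- \<infinity>) \<infinity>) G" using Gi
      by (simp add: set_integrable_def einterval_def)
  next
    have *: "((\<lambda>t. f t * cis (- (t * a))) \<longlongrightarrow> 0) F" if "(f \<longlongrightarrow> 0) F" for F
    proof -
      have "((\<lambda>t. norm (f t * cis (- (t * a)))) \<longlongrightarrow> 0) F"
        using tendsto_norm[OF that] by (simp add: norm_mult)
      thus ?thesis by (simp add: tendsto_norm_zero_iff)
    qed
    show "(((\<lambda>t. f t * cis (- (t * a))) \<circ> real_of_ereal) \<longlongrightarrow> 0) (at_right (- \<infinity>))"
      unfolding ereal_tendsto_simps1 by (rule *[OF L(2)])
    show "(((\<lambda>t. f t * cis (- (t * a))) \<circ> real_of_ereal) \<longlongrightarrow> 0) (at_left \<infinity>)"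
      unfolding ereal_tendsto_simps1 by (rule *[OF L(1)])
  qed simp
  hence "(LINT t|lborel. G t) = 0"
    by (simp add: interval_lebesgue_integral_def set_lebesgue_integral_def einterval_def)
  hence "(LINT t|lborel. f' t * cis (- (t * a))) = \<i> * of_real a * (LINT t|lborel. f t * cis (- (t * a)))"
    unfolding G_def
    using integrable_mult_right[OF integrable_mult_cis[OF I(1)], of "\<i> * of_real a" a]
    by (subst (asm) Bochner_Integration.integral_diff) (auto intro: integrable_mult_cis I)
  thus ?thesis unfolding fourier_def by simp
qed



lemma integrable_decay:
  fixes g :: "real \<Rightarrow> 'a::{banach, second_countable_topology}"
  assumes c: "continuous_on UNIV g" and b: "\<And>x. norm (g x) \<le> C / (1 + x\<^sup>2)"
  shows "integrable lborel g"
proof (rule Bochner_Integration.integrable_bound[where f = "\<lambda>x. C * inverse (1 + x\<^sup>2)"])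
  show "integrable lborel (\<lambda>x. C * inverse (1 + x\<^sup>2))" using integrable_inv_sq by auto
  show "g \<in> borel_measurable lborel" using borel_measurable_continuous_onI[OF c] by simp
  show "AE x in lborel. norm (g x) \<le> norm (C * inverse (1 + x\<^sup>2))"
  proof (rule AE_I2)
    fix x :: real
    have "0 \<le> norm (g x)" by simp
    also have "\<dots> \<le> C / (1 + x\<^sup>2)" by (rule b)
    finally have "0 \<le> C" by (simp add: divide_nonneg_pos add_pos_nonneg zero_le_divide_iff)
      (smt (verit) zero_le_power2)
    thus "norm (g x) \<le> norm (C * inverse (1 + x\<^sup>2))" using b[of x]
      by (simp add: divide_inverse abs_mult)
  qed
qed

lemma tendsto_decay:
  fixes g :: "real \<Rightarrow> 'a::real_normed_vector"
  assumes b: "\<And>x. norm (g x) \<le> C / (1 + x\<^sup>2)"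
  shows "(g \<longlongrightarrow> 0) at_top" "(g \<longlongrightarrow> 0) at_bot"
proof -
  have 1: "((\<lambda>x::real. C / (1 + x\<^sup>2)) \<longlongrightarrow> 0) at_top" by real_asymp
  have 2: "((\<lambda>x::real. C / (1 + x\<^sup>2)) \<longlongrightarrow> 0) at_bot" by real_asymp
  show "(g \<longlongrightarrow> 0) at_top" by (rule Lim_null_comparison[OF _ 1]) (use b in auto)
  show "(g \<longlongrightarrow> 0) at_bot" by (rule Lim_null_comparison[OF _ 2]) (use b in auto)
qed

context
  fixes f :: "real \<Rightarrow> complex"
  assumes S: "schwartz f"
begin

lemma sch_deriv: "(iter_deriv k f has_vector_derivative iter_deriv (Suc k) f x) (at x)"
  using S unfolding schwartz_def smooth_real_def by (simp add: vector_derivative_works)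

lemma sch_cont: "continuous_on UNIV (iter_deriv k f)"
  by (metis continuous_at_imp_continuous_on has_vector_derivative_continuous sch_deriv)

lemma sch_isCont: "isCont (iter_deriv k f) x"
  using sch_cont by (simp add: continuous_on_eq_continuous_at)

lemma sch_bound: "\<exists>C. \<forall>x. norm (iter_deriv k f x) \<le> C / (1 + x\<^sup>2)"
proof -
  from S obtain C0 where C0: "\<And>x. \<bar>x\<bar>^0 * norm (iter_deriv k f x) \<le> C0" unfolding schwartz_def by blast
  from S obtain C2 where C2: "\<And>x. \<bar>x\<bar>^2 * norm (iter_deriv k f x) \<le> C2" unfolding schwartz_def by blast
  show ?thesis
  proof (intro exI allI)
    fix x :: real
    have "(1 + x\<^sup>2) * norm (iter_deriv k f x) \<le> C0 + C2" using C0[of x] C2[of x]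
      by (simp add: algebra_simps)
    thus "norm (iter_deriv k f x) \<le> (C0 + C2) / (1 + x\<^sup>2)"
      by (simp add: pos_le_divide_eq add_pos_nonneg mult.commute)
  qed
qed

lemma sch_bound1: "\<exists>C. \<forall>x. norm (x *\<^sub>R iter_deriv k f x) \<le> C / (1 + x\<^sup>2)"
proof -
  from S obtain C0 where C0: "\<And>x. \<bar>x\<bar>^1 * norm (iter_deriv k f x) \<le> C0" unfolding schwartz_def by blast
  from S obtain C2 where C2: "\<And>x. \<bar>x\<bar>^3 * norm (iter_deriv k f x) \<le> C2" unfolding schwartz_def by blast
  show ?thesis
  proof (intro exI allI)
    fix x :: real
    have "\<bar>x\<bar>^3 = \<bar>x\<bar> * x\<^sup>2"
      by (simp add: power3_eq_cube power2_eq_square abs_mult_self_eq mult.assoc)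
    hence "(1 + x\<^sup>2) * (\<bar>x\<bar> * norm (iter_deriv k f x)) \<le> C0 + C2" using C0[of x] C2[of x]
      by (simp add: algebra_simps)
    thus "norm (x *\<^sub>R iter_deriv k f x) \<le> (C0 + C2) / (1 + x\<^sup>2)"
      by (simp add: pos_le_divide_eq add_pos_nonneg mult.commute)
  qed
qed

lemma sch_integrable: "integrable lborel (iter_deriv k f)"
  using sch_bound[of k] sch_cont[of k] integrable_decay by blast

lemma sch_integrable1: "integrable lborel (\<lambda>x. x *\<^sub>R iter_deriv k f x)"
proof -
  have "continuous_on UNIV (\<lambda>x. x *\<^sub>R iter_deriv k f x)" using sch_cont[of k] by (intro continuous_intros)
  thus ?thesis using sch_bound1[of k] integrable_decay by blast
qed

lemma sch_fourier_step: "fourier (iter_deriv (Suc k) f) a = \<i> * of_real a * fourier (iter_deriv k f) a"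
proof -
  obtain C where "\<And>x. norm (iter_deriv k f x) \<le> C / (1 + x\<^sup>2)" using sch_bound by blast
  note L = tendsto_decay[OF this]
  show ?thesis by (rule fourier_deriv[OF sch_deriv sch_isCont sch_integrable sch_integrable L])
qed

lemma sch_fourier_pow: "fourier (iter_deriv k f) a = (\<i> * of_real a)^k * fourier f a"
proof (induction k)
  case (Suc k)
  show ?case unfolding sch_fourier_step Suc.IH by (simp add: mult.assoc)
qed simp

lemma sch_fourier_decay: "\<exists>M. \<forall>y. norm (fourier f y) \<le> M / (1 + y\<^sup>2)\<^sup>2"
proof -
  define N0 where "N0 = (LINT t|lborel. norm (f t)) / (2*pi)"
  define N4 where "N4 = (LINT t|lborel. norm (iter_deriv 4 f t)) / (2*pi)"
  show ?thesis
  proof (intro exI allI)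
    fix y
    have h0: "norm (fourier f y) \<le> N0" unfolding N0_def by (rule fourier_bound)
    have h4: "y^4 * norm (fourier f y) \<le> N4"
      using fourier_bound[of "iter_deriv 4 f" y] unfolding N4_def sch_fourier_pow
      by (simp add: norm_mult norm_power abs_mult power_mult_distrib)
    have "y^4 * norm (fourier f y) \<ge> 0" by simp
    have "(1 + y\<^sup>2)\<^sup>2 \<le> 2 * (1 + y^4)"
    proof -
      have "0 \<le> (y\<^sup>2 - 1)\<^sup>2" by simp
      thus ?thesis by (simp add: power2_eq_square algebra_simps power4_eq_xxxx)
    qed
    hence "(1 + y\<^sup>2)\<^sup>2 * norm (fourier f y) \<le> 2 * (1 + y^4) * norm (fourier f y)"
      by (intro mult_right_mono) auto
    also have "\<dots> \<le> 2 * (N0 + N4)" using h0 h4 by (simp add: algebra_simps)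
    finally have q: "(1 + y\<^sup>2)\<^sup>2 * norm (fourier f y) \<le> 2 * (N0 + N4)" .
    have p: "(0::real) < (1 + y\<^sup>2)\<^sup>2" using zero_le_power2[of y] by (intro zero_less_power) linarith
    show "norm (fourier f y) \<le> 2 * (N0 + N4) / (1 + y\<^sup>2)\<^sup>2"
      using p q by (simp add: pos_le_divide_eq mult.commute)
  qed
qed

lemma sch_fourier_lip: "\<exists>L. \<forall>a b. \<bar>a - b\<bar> \<le> 1 \<longrightarrow> norm (fourier f a - fourier f b) \<le> L * \<bar>a - b\<bar> / jbr a"
proof -
  define f1 where "f1 = iter_deriv 1 f"
  define L0 where "L0 = (LINT t|lborel. norm (t *\<^sub>R f t)) / (2*pi)"
  define L1 where "L1 = (LINT t|lborel. norm (t *\<^sub>R f1 t)) / (2*pi)"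
  define N1 where "N1 = (LINT t|lborel. norm (f1 t)) / (2*pi)"
  have lip0: "norm (fourier f a - fourier f b) \<le> \<bar>a - b\<bar> * L0" for a b
    using fourier_lip[OF sch_integrable[of 0] sch_integrable1[of 0], of a b] unfolding L0_def by simp
  have lip1: "norm (fourier f1 a - fourier f1 b) \<le> \<bar>a - b\<bar> * L1" for a b
    using fourier_lip[OF sch_integrable[of 1] sch_integrable1[of 1], of a b] unfolding L1_def f1_def by simp
  have bd1: "norm (fourier f1 a) \<le> N1" for a unfolding N1_def by (rule fourier_bound)
  have L0: "0 \<le> L0" unfolding L0_def by (simp add: integral_nonneg_AE)
  have N1: "0 \<le> N1" unfolding N1_def by (simp add: integral_nonneg_AE)
  have L1: "0 \<le> L1" unfolding L1_def by (simp add: integral_nonneg_AE)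
  have step: "fourier f1 x = \<i> * of_real x * fourier f x" for x
    using sch_fourier_step[of 0 x] unfolding f1_def by simp
  show ?thesis
  proof (intro exI allI impI)
    fix a b :: real
    assume ab: "\<bar>a - b\<bar> \<le> 1"
    have jp: "jbr a > 0" by (rule jbr_pos)
    show "norm (fourier f a - fourier f b) \<le> (3 * L0 + 2 * (L1 + N1)) * \<bar>a - b\<bar> / jbr a"
    proof (cases "\<bar>a\<bar> \<le> 2")
      case True
      have "jbr a \<le> sqrt 9" unfolding jbr_def
      proof (rule real_sqrt_le_mono)
        have "a\<^sup>2 \<le> 2\<^sup>2" using True by (metis abs_le_square_iff abs_numeral)
        thus "1 + a\<^sup>2 \<le> 9" by simp
      qed
      also have "sqrt 9 = (3::real)" by (simp add: real_sqrt_unique)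
      finally have j3: "jbr a \<le> 3" .
      have "norm (fourier f a - fourier f b) \<le> \<bar>a - b\<bar> * L0" by (rule lip0)
      also have "\<dots> \<le> (3 * L0) * \<bar>a - b\<bar> / jbr a"
        using j3 jp L0 by (simp add: pos_le_divide_eq mult.commute mult.left_commute; intro mult_left_mono mult_right_mono; simp)
      also have "\<dots> \<le> (3 * L0 + 2 * (L1 + N1)) * \<bar>a - b\<bar> / jbr a"
        using jp L1 N1 by (intro divide_right_mono mult_right_mono) auto
      finally show ?thesis .
    next
      case False
      hence a2: "\<bar>a\<bar> > 2" by simp
      have b1: "\<bar>b\<bar> \<ge> 1" using ab a2 by linarith
      have a0: "a \<noteq> 0" "b \<noteq> 0" using a2 b1 by auto
      have fa: "fourier f a = fourier f1 a / (\<i> * of_real a)" using step[of a] a0 by simp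
      have fb: "fourier f b = fourier f1 b / (\<i> * of_real b)" using step[of b] a0 by simp
      have eq: "fourier f a - fourier f b = (fourier f1 a - fourier f1 b) / (\<i> * of_real a)
          + fourier f1 b * (of_real (b - a) / (\<i> * of_real a * of_real b))"
        unfolding fa fb using a0 by (simp add: field_simps)
      have "norm (fourier f a - fourier f b) \<le> norm ((fourier f1 a - fourier f1 b) / (\<i> * of_real a))
          + norm (fourier f1 b * (of_real (b - a) / (\<i> * of_real a * of_real b)))"
        unfolding eq by (rule norm_triangle_ineq)
      also have "\<dots> = norm (fourier f1 a - fourier f1 b) / \<bar>a\<bar> + norm (fourier f1 b) * (\<bar>a - b\<bar> / (\<bar>a\<bar> * \<bar>b\<bar>))"
        by (simp add: norm_mult norm_divide abs_minus_commute flip: of_real_diff)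
      also have "\<dots> \<le> \<bar>a - b\<bar> * L1 / \<bar>a\<bar> + N1 * (\<bar>a - b\<bar> / \<bar>a\<bar>)"
      proof (intro add_mono divide_right_mono mult_mono lip1 bd1)
        show "\<bar>a - b\<bar> / (\<bar>a\<bar> * \<bar>b\<bar>) \<le> \<bar>a - b\<bar> / \<bar>a\<bar>"
          using b1 a0 by (intro divide_left_mono) (auto simp: mult_le_cancel_left1)
      qed (auto simp: N1)
      also have "\<dots> = (L1 + N1) * \<bar>a - b\<bar> / \<bar>a\<bar>" by (simp add: algebra_simps add_divide_distrib)
      also have "\<dots> \<le> (L1 + N1) * \<bar>a - b\<bar> / (jbr a / 2)"
      proof (intro divide_left_mono)
        have "1*1 \<le> \<bar>a\<bar>*\<bar>a\<bar>" using a2 by (intro mult_mono) auto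
        hence aa: "1 \<le> a*a" by (simp add: abs_mult_self_eq)
        have "jbr a \<le> sqrt ((2 * \<bar>a\<bar>)\<^sup>2)" unfolding jbr_def
          using aa by (intro real_sqrt_le_mono) (simp add: power2_eq_square)
        also have "sqrt ((2 * \<bar>a\<bar>)\<^sup>2) = 2 * \<bar>a\<bar>" using real_sqrt_abs[of "2 * \<bar>a\<bar>"] by simp
        finally show "jbr a / 2 \<le> \<bar>a\<bar>" by simp
      qed (use jp L1 N1 a0 in auto)
      also have "\<dots> = 2 * (L1 + N1) * \<bar>a - b\<bar> / jbr a" by simp
      also have "\<dots> \<le> (3 * L0 + 2 * (L1 + N1)) * \<bar>a - b\<bar> / jbr a"
        using jp L0 by (intro divide_right_mono mult_right_mono) auto
      finally show ?thesis .
    qed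
  qed
qed

end


lemma jbr_le_sq: "jbr y \<le> 1 + y\<^sup>2"
proof -
  have "jbr y * 1 \<le> jbr y * jbr y" using jbr_ge1[of y] jbr_pos[of y] by (intro mult_left_mono) auto
  also have "\<dots> = 1 + y\<^sup>2" using jbr_sq[of y] by (simp add: power2_eq_square)
  finally show ?thesis by simp
qed

lemma jbr_le_2abs: "\<bar>x\<bar> \<ge> 1 \<Longrightarrow> jbr x \<le> 2 * \<bar>x\<bar>"
proof -
  assume a: "\<bar>x\<bar> \<ge> 1"
  have "1*1 \<le> \<bar>x\<bar>*\<bar>x\<bar>" using a by (intro mult_mono) auto
  hence aa: "1 \<le> x*x" by (simp add: abs_mult_self_eq)
  have "jbr x \<le> sqrt ((2 * \<bar>x\<bar>)\<^sup>2)" unfolding jbr_def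
    using aa by (intro real_sqrt_le_mono) (simp add: power2_eq_square)
  also have "sqrt ((2 * \<bar>x\<bar>)\<^sup>2) = 2 * \<bar>x\<bar>" using real_sqrt_abs[of "2 * \<bar>x\<bar>"] by simp
  finally show ?thesis .
qed

lemma tail_aux:
  fixes n M y \<mu> \<xi> :: real
  assumes mu: "\<mu> \<ge> 1" and n: "0 \<le> n" "n \<le> M / (1 + y\<^sup>2)\<^sup>2" and P: "jbr \<xi> \<le> 2 * jbr y * jbr \<mu>"
  shows "n / \<mu> \<le> 4 * M / jbr \<xi> * inverse (1 + y\<^sup>2)"
proof -
  have yp: "0 < 1 + y\<^sup>2" by (simp add: add_pos_nonneg)
  have "0 \<le> M / (1 + y\<^sup>2)\<^sup>2" using n by linarith
  hence M: "0 \<le> M" using yp by (simp add: zero_le_divide_iff)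
  have "jbr \<mu> \<le> 2 * \<mu>" using jbr_le_2abs[of \<mu>] mu by simp
  hence "jbr y * jbr \<mu> \<le> (1 + y\<^sup>2) * (2 * \<mu>)"
    using jbr_le_sq[of y] jbr_pos[of y] jbr_pos[of \<mu>] yp by (intro mult_mono) auto
  hence J: "jbr \<xi> \<le> 4 * \<mu> * (1 + y\<^sup>2)" using P by (simp add: algebra_simps)
  have jx: "0 < jbr \<xi>" by (rule jbr_pos)
  have "n / \<mu> \<le> M / (1 + y\<^sup>2)\<^sup>2 / \<mu>" using n mu by (intro divide_right_mono) auto
  also have "\<dots> = 4 * M / (4 * \<mu> * (1 + y\<^sup>2) * (1 + y\<^sup>2))"
  proof -
    define z where "z = 1 + y\<^sup>2"
    have "z \<noteq> 0" "\<mu> \<noteq> 0" using yp mu unfolding z_def by auto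
    hence "M / z\<^sup>2 / \<mu> = 4 * M / (4 * \<mu> * z * z)" by (simp add: power2_eq_square field_simps)
    thus ?thesis unfolding z_def .
  qed
  also have "\<dots> \<le> 4 * M / (jbr \<xi> * (1 + y\<^sup>2))"
    using J M mu yp jx by (intro divide_left_mono mult_right_mono mult_pos_pos) auto
  also have "\<dots> = 4 * M / jbr \<xi> * inverse (1 + y\<^sup>2)" using mu yp jx
    by (simp add: field_simps)
  finally show ?thesis .
qed

lemma integrable_inv_shift:
  "integrable lborel (\<lambda>x::real. inverse (1 + (c - x)\<^sup>2))" "integrable lborel (\<lambda>x::real. inverse (1 + (c + x)\<^sup>2))"
  using lborel_integrable_real_affine[OF integrable_inv_sq, of "-1" c]
    lborel_integrable_real_affine[OF integrable_inv_sq, of 1 c] by simp_all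

lemma integral_inv_shift:
  "(LINT x|lborel. inverse (1 + (c - x)\<^sup>2)) = pi" "(LINT x|lborel. inverse (1 + (c + x)\<^sup>2)) = pi"
  using lborel_integral_real_affine[of "-1" "\<lambda>x. inverse (1 + x\<^sup>2)" c]
    lborel_integral_real_affine[of 1 "\<lambda>x. inverse (1 + x\<^sup>2)" c] integral_inv_sq by simp_all



lemma hilbert_bound:
  fixes g :: "real \<Rightarrow> complex"
  assumes cont: "continuous_on UNIV g"
    and dec: "\<And>y. norm (g y) \<le> M / (1 + y\<^sup>2)\<^sup>2"
    and lip: "\<And>a b. \<bar>a - b\<bar> \<le> 1 \<Longrightarrow> norm (g a - g b) \<le> L * \<bar>a - b\<bar> / jbr a"
  shows "norm (hilbert g \<xi>) \<le> (2*L + 8*M*pi) / jbr \<xi>"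
proof -
  have jx: "0 < jbr \<xi>" by (rule jbr_pos)
  have M: "0 \<le> M" using dec[of 0] norm_ge_zero[of "g 0"] by simp (meson norm_ge_zero order_trans)
  have j0: "jbr 0 = 1" by (simp add: jbr_def)
  have L: "0 \<le> L" using lip[of 0 1] norm_ge_zero[of "g 0 - g 1"] j0 by simp (meson norm_ge_zero order_trans)
  have dec1: "norm (g y) \<le> M * inverse (1 + y\<^sup>2)" for y
  proof -
    have yp: "0 < 1 + y\<^sup>2" by (simp add: add_pos_nonneg)
    have "1 + y\<^sup>2 \<le> (1 + y\<^sup>2)\<^sup>2" using yp by (simp add: power2_eq_square)
    hence "M / (1 + y\<^sup>2)\<^sup>2 \<le> M / (1 + y\<^sup>2)" using M yp by (intro divide_left_mono) auto
    thus ?thesis using dec[of y] by (simp add: divide_inverse)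
  qed
  define k where "k \<mu> = g (\<xi> - \<mu>) / complex_of_real \<mu>" for \<mu>
  define D where "D \<mu> = (g (\<xi> - \<mu>) - g (\<xi> + \<mu>)) / complex_of_real \<mu>" for \<mu>
  define T where "T \<epsilon> = (LINT \<mu>|lborel. indicator {\<mu>. \<epsilon> < \<bar>\<mu>\<bar>} \<mu> *\<^sub>R k \<mu>)" for \<epsilon>
  have HT: "hilbert g \<xi> = Lim (at_right 0) T" unfolding hilbert_def T_def k_def by simp
  have gm1: "(\<lambda>\<mu>. g (\<xi> - \<mu>)) \<in> borel_measurable lborel"
    by (simp, intro borel_measurable_continuous_onI continuous_on_compose2[OF cont] continuous_intros) auto
  have gm2: "(\<lambda>\<mu>. g (\<xi> + \<mu>)) \<in> borel_measurable lborel"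
    by (simp, intro borel_measurable_continuous_onI continuous_on_compose2[OF cont] continuous_intros) auto
  have ofm: "(\<lambda>\<mu>::real. complex_of_real \<mu>) \<in> borel_measurable lborel"
    using borel_measurable_of_real by simp
  have km: "k \<in> borel_measurable lborel" unfolding k_def using gm1 ofm by (intro borel_measurable_divide)
  have km2: "(\<lambda>\<mu>. g (\<xi> + \<mu>) / complex_of_real \<mu>) \<in> borel_measurable lborel" using gm2 ofm by (intro borel_measurable_divide)
  have Dm: "D \<in> borel_measurable lborel" unfolding D_def using gm1 gm2 ofm by (intro borel_measurable_divide borel_measurable_diff)
  have Dnear: "norm (D \<mu>) \<le> 2 * L / jbr \<xi>" if "0 < \<mu>" "\<mu> \<le> 1" for \<mu>
  proof -
    have "norm (g (\<xi> - \<mu>) - g (\<xi> + \<mu>)) \<le> norm (g \<xi> - g (\<xi> - \<mu>)) + norm (g \<xi> - g (\<xi> + \<mu>))"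
    proof -
      have "g (\<xi> - \<mu>) - g (\<xi> + \<mu>) = (g \<xi> - g (\<xi> + \<mu>)) - (g \<xi> - g (\<xi> - \<mu>))" by simp
      hence "norm (g (\<xi> - \<mu>) - g (\<xi> + \<mu>)) \<le> norm (g \<xi> - g (\<xi> + \<mu>)) + norm (g \<xi> - g (\<xi> - \<mu>))"
        by (metis norm_triangle_ineq4)
      thus ?thesis by simp
    qed
    also have "\<dots> \<le> L * \<mu> / jbr \<xi> + L * \<mu> / jbr \<xi>"
      using lip[of \<xi> "\<xi> - \<mu>"] lip[of \<xi> "\<xi> + \<mu>"] that by (intro add_mono) auto
    finally have "norm (g (\<xi> - \<mu>) - g (\<xi> + \<mu>)) \<le> \<mu> * (2 * L / jbr \<xi>)" by (simp add: mult_ac)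
    thus ?thesis unfolding D_def using that by (simp add: norm_divide pos_divide_le_eq mult.commute)
  qed
  have Dfar: "norm (D \<mu>) \<le> 4 * M / jbr \<xi> * (inverse (1 + (\<xi> - \<mu>)\<^sup>2) + inverse (1 + (\<xi> + \<mu>)\<^sup>2))"
    if "1 < \<mu>" for \<mu>
  proof -
    have "norm (D \<mu>) \<le> (norm (g (\<xi> - \<mu>)) + norm (g (\<xi> + \<mu>))) / \<mu>"
      unfolding D_def using that by (simp add: norm_divide divide_right_mono norm_triangle_ineq4)
    also have "\<dots> = norm (g (\<xi> - \<mu>)) / \<mu> + norm (g (\<xi> + \<mu>)) / \<mu>" by (simp add: add_divide_distrib)
    also have "\<dots> \<le> 4 * M / jbr \<xi> * inverse (1 + (\<xi> - \<mu>)\<^sup>2) + 4 * M / jbr \<xi> * inverse (1 + (\<xi> + \<mu>)\<^sup>2)"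
    proof (intro add_mono tail_aux)
      show "jbr \<xi> \<le> 2 * jbr (\<xi> - \<mu>) * jbr \<mu>" using jbr_peetre[of "\<xi> - \<mu>" \<mu>] by simp
      have "jbr (-\<mu>) = jbr \<mu>" by (simp add: jbr_def)
      thus "jbr \<xi> \<le> 2 * jbr (\<xi> + \<mu>) * jbr \<mu>" using jbr_peetre[of "\<xi> + \<mu>" "-\<mu>"] by simp
      show "1 \<le> \<mu>" "1 \<le> \<mu>" using that by auto
      show "norm (g (\<xi> - \<mu>)) \<le> M / (1 + (\<xi> - \<mu>)\<^sup>2)\<^sup>2" by (rule dec)
      show "norm (g (\<xi> + \<mu>)) \<le> M / (1 + (\<xi> + \<mu>)\<^sup>2)\<^sup>2" by (rule dec)
    qed auto
    finally show ?thesis by (simp add: distrib_left)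
  qed
  define B where "B \<mu> = indicator {0<..1} \<mu> * (2 * L / jbr \<xi>)
      + 4 * M / jbr \<xi> * (inverse (1 + (\<xi> - \<mu>)\<^sup>2) + inverse (1 + (\<xi> + \<mu>)\<^sup>2))" for \<mu>
  have Bnn: "0 \<le> B \<mu>" for \<mu> unfolding B_def using M L jx
    by (intro add_nonneg_nonneg mult_nonneg_nonneg) (auto simp: add_pos_nonneg)
  have Bint: "integrable lborel B" unfolding B_def
    using integrable_inv_shift by (intro Bochner_Integration.integrable_add integrable_mult_left integrable_mult_right) auto
  have m1: "measure lborel {0<..(1::real)} = 1" using measure_lborel_Ioc[of 0 1] by simp
  have Bval: "(LINT \<mu>|lborel. B \<mu>) = (2*L + 8*M*pi) / jbr \<xi>"
  proof -
    have "(LINT \<mu>|lborel. B \<mu>) = (LINT (\<mu>::real)|lborel. indicator {0<..1} \<mu> * (2 * L / jbr \<xi>))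
       + 4 * M / jbr \<xi> * ((LINT \<mu>|lborel. inverse (1 + (\<xi> - \<mu>)\<^sup>2)) + (LINT \<mu>|lborel. inverse (1 + (\<xi> + \<mu>)\<^sup>2)))"
      unfolding B_def using integrable_inv_shift
      by (subst Bochner_Integration.integral_add) (auto intro!: integrable_mult_left simp: Bochner_Integration.integral_add m1)
    also have "(LINT (\<mu>::real)|lborel. indicator {0<..1} \<mu> * (2 * L / jbr \<xi>)) = measure lborel {0<..(1::real)} * (2 * L / jbr \<xi>)"
      by (rule integral_mult_left_zero[THEN trans]) simp
    also have "measure lborel {0<..(1::real)} = 1" using measure_lborel_Ioc[of 0 1] by simp
    also have "1 * (2 * L / jbr \<xi>) + 4 * M / jbr \<xi> * ((LINT \<mu>|lborel. inverse (1 + (\<xi> - \<mu>)\<^sup>2)) + (LINT \<mu>|lborel. inverse (1 + (\<xi> + \<mu>)\<^sup>2)))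
       = 2 * L / jbr \<xi> + 4 * M / jbr \<xi> * (pi + pi)" by (simp add: integral_inv_shift)
    finally show ?thesis by (simp add: add_divide_distrib)
  qed
  have DB: "norm (indicator {\<epsilon><..} \<mu> *\<^sub>R D \<mu>) \<le> B \<mu>" if "0 \<le> \<epsilon>" for \<epsilon> \<mu>
  proof (cases "\<epsilon> < \<mu>")
    case False thus ?thesis using Bnn by simp
  next
    case True
    show ?thesis
    proof (cases "\<mu> \<le> 1")
      case True
      hence "norm (D \<mu>) \<le> 2 * L / jbr \<xi>" using Dnear \<open>\<epsilon> < \<mu>\<close> that by auto
      moreover have "0 \<le> 4 * M / jbr \<xi> * (inverse (1 + (\<xi> - \<mu>)\<^sup>2) + inverse (1 + (\<xi> + \<mu>)\<^sup>2))"
        using M jx by (intro mult_nonneg_nonneg add_nonneg_nonneg) (auto simp: add_pos_nonneg)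
      ultimately show ?thesis unfolding B_def using True \<open>\<epsilon> < \<mu>\<close> that by (simp add: indicator_def)
    next
      case False
      thus ?thesis unfolding B_def using Dfar[of \<mu>] \<open>\<epsilon> < \<mu>\<close> by (simp add: indicator_def)
    qed
  qed
  have DI: "integrable lborel (\<lambda>\<mu>. indicator {\<epsilon><..} \<mu> *\<^sub>R D \<mu>)" if "0 \<le> \<epsilon>" for \<epsilon>
    by (rule Bochner_Integration.integrable_bound[OF Bint]) (use Dm DB[OF that] Bnn in \<open>auto intro!: borel_measurable_scaleR\<close>)
  define I where "I = (LINT \<mu>|lborel. indicator {0<..} \<mu> *\<^sub>R D \<mu>)"
  have step1: "T \<epsilon> = (LINT \<mu>|lborel. indicator {\<epsilon><..} \<mu> *\<^sub>R D \<mu>)" if ep: "0 < \<epsilon>" for \<epsilon>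
  proof -
    have kb: "norm (g y / complex_of_real \<mu>) \<le> M / \<epsilon> * inverse (1 + y\<^sup>2)" if "\<epsilon> \<le> \<bar>\<mu>\<bar>" for y \<mu>
    proof -
      have "norm (g y / complex_of_real \<mu>) = norm (g y) / \<bar>\<mu>\<bar>" by (simp add: norm_divide)
      also have "\<dots> \<le> M * inverse (1 + y\<^sup>2) / \<epsilon>"
        using dec1[of y] that ep M by (intro frac_le) (auto simp: add_pos_nonneg)
      finally show ?thesis by simp
    qed
    define A where "A \<mu> = indicator {\<epsilon><..} \<mu> *\<^sub>R k \<mu>" for \<mu>
    define C where "C \<mu> = indicator {..<-\<epsilon>} \<mu> *\<^sub>R k \<mu>" for \<mu>
    define R where "R \<mu> = indicator {\<epsilon><..} \<mu> *\<^sub>R (g (\<xi> + \<mu>) / complex_of_real \<mu>)" for \<mu>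
    have Ai: "integrable lborel A"
    proof (rule Bochner_Integration.integrable_bound[where f = "\<lambda>\<mu>. M / \<epsilon> * inverse (1 + (\<xi> - \<mu>)\<^sup>2)"])
      show "integrable lborel (\<lambda>\<mu>. M / \<epsilon> * inverse (1 + (\<xi> - \<mu>)\<^sup>2))"
        using integrable_inv_shift(1) by (intro integrable_mult_right)
      show "A \<in> borel_measurable lborel" unfolding A_def using km by (intro borel_measurable_scaleR) auto
      show "AE x in lborel. norm (A x) \<le> norm (M / \<epsilon> * inverse (1 + (\<xi> - x)\<^sup>2))"
        using kb ep M unfolding A_def k_def
        by (intro AE_I2) (auto simp: indicator_def abs_mult add_pos_nonneg intro!: mult_nonneg_nonneg)
    qed
    have Ci: "integrable lborel C"
    proof (rule Bochner_Integration.integrable_bound[where f = "\<lambda>\<mu>. M / \<epsilon> * inverse (1 + (\<xi> - \<mu>)\<^sup>2)"])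
      show "integrable lborel (\<lambda>\<mu>. M / \<epsilon> * inverse (1 + (\<xi> - \<mu>)\<^sup>2))"
        using integrable_inv_shift(1) by (intro integrable_mult_right)
      show "C \<in> borel_measurable lborel" unfolding C_def using km by (intro borel_measurable_scaleR) auto
      show "AE x in lborel. norm (C x) \<le> norm (M / \<epsilon> * inverse (1 + (\<xi> - x)\<^sup>2))"
        using kb ep M unfolding C_def k_def
        by (intro AE_I2) (auto simp: indicator_def abs_mult add_pos_nonneg intro!: mult_nonneg_nonneg)
    qed
    have Ri: "integrable lborel R"
    proof (rule Bochner_Integration.integrable_bound[where f = "\<lambda>\<mu>. M / \<epsilon> * inverse (1 + (\<xi> + \<mu>)\<^sup>2)"])
      show "integrable lborel (\<lambda>\<mu>. M / \<epsilon> * inverse (1 + (\<xi> + \<mu>)\<^sup>2))"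
        using integrable_inv_shift(2) by (intro integrable_mult_right)
      show "R \<in> borel_measurable lborel" unfolding R_def using km2 by (intro borel_measurable_scaleR) auto
      show "AE x in lborel. norm (R x) \<le> norm (M / \<epsilon> * inverse (1 + (\<xi> + x)\<^sup>2))"
        using kb ep M unfolding R_def
        by (intro AE_I2) (auto simp: indicator_def abs_mult add_pos_nonneg intro!: mult_nonneg_nonneg)
    qed
    have "T \<epsilon> = (LINT \<mu>|lborel. A \<mu> + C \<mu>)"
      unfolding T_def A_def C_def using ep by (intro Bochner_Integration.integral_cong) (auto simp: indicator_def)
    also have "\<dots> = (LINT \<mu>|lborel. A \<mu>) + (LINT \<mu>|lborel. C \<mu>)" using Ai Ci by simp
    also have "(LINT \<mu>|lborel. C \<mu>) = (LINT \<mu>|lborel. C (0 + (-1) * \<mu>))"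
      using lborel_integral_real_affine[of "-1" C 0] by simp
    also have "\<dots> = (LINT \<mu>|lborel. - R \<mu>)"
      unfolding C_def R_def k_def by (intro Bochner_Integration.integral_cong) (auto simp: indicator_def)
    also have "(LINT \<mu>|lborel. A \<mu>) + (LINT \<mu>|lborel. - R \<mu>) = (LINT \<mu>|lborel. A \<mu> - R \<mu>)"
      using Ai Ri by simp
    also have "\<dots> = (LINT \<mu>|lborel. indicator {\<epsilon><..} \<mu> *\<^sub>R D \<mu>)"
      unfolding A_def R_def k_def D_def
      by (intro Bochner_Integration.integral_cong) (auto simp: indicator_def diff_divide_distrib)
    finally show ?thesis .
  qed
  have step2: "norm (T \<epsilon> - I) \<le> 2 * L / jbr \<xi> * \<epsilon>" if ep: "0 < \<epsilon>" "\<epsilon> \<le> 1" for \<epsilon>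
  proof -
    have "T \<epsilon> - I = (LINT \<mu>|lborel. indicator {\<epsilon><..} \<mu> *\<^sub>R D \<mu> - indicator {0<..} \<mu> *\<^sub>R D \<mu>)"
      unfolding step1[OF ep(1)] I_def using DI[of \<epsilon>] DI[of 0] ep by simp
    also have "norm \<dots> \<le> (LINT \<mu>|lborel. norm (indicator {\<epsilon><..} \<mu> *\<^sub>R D \<mu> - indicator {0<..} \<mu> *\<^sub>R D \<mu>))"
      by (rule integral_norm_bound)
    also have "\<dots> \<le> (LINT \<mu>|lborel. indicator {0<..\<epsilon>} \<mu> * (2 * L / jbr \<xi>))"
    proof (rule integral_mono)
      show "integrable lborel (\<lambda>\<mu>. norm (indicator {\<epsilon><..} \<mu> *\<^sub>R D \<mu> - indicator {0<..} \<mu> *\<^sub>R D \<mu>))"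
        using DI[of \<epsilon>] DI[of 0] ep by auto
      show "integrable lborel (\<lambda>\<mu>. indicator {0<..\<epsilon>} \<mu> * (2 * L / jbr \<xi>))"
        using ep by (intro integrable_mult_left integrable_real_indicator) auto
      fix \<mu>
      show "norm (indicator {\<epsilon><..} \<mu> *\<^sub>R D \<mu> - indicator {0<..} \<mu> *\<^sub>R D \<mu>) \<le> indicator {0<..\<epsilon>} \<mu> * (2 * L / jbr \<xi>)"
        using Dnear[of \<mu>] ep by (auto simp: indicator_def)
    qed
    also have "\<dots> = measure lborel {0<..\<epsilon>} * (2 * L / jbr \<xi>)" by simp
    also have "\<dots> = 2 * L / jbr \<xi> * \<epsilon>" using ep by simp
    finally show ?thesis .
  qed
  have "((\<lambda>\<epsilon>. T \<epsilon> - I) \<longlongrightarrow> 0) (at_right 0)"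
  proof (rule Lim_null_comparison)
    show "\<forall>\<^sub>F \<epsilon> in at_right 0. norm (T \<epsilon> - I) \<le> 2 * L / jbr \<xi> * \<epsilon>"
      unfolding eventually_at_right_field using step2 by (intro exI[of _ 1]) auto
    show "((\<lambda>\<epsilon>. 2 * L / jbr \<xi> * \<epsilon>) \<longlongrightarrow> 0) (at_right 0)"
      by (rule tendsto_eq_intros refl tendsto_ident_at)+ simp
  qed
  hence "((\<lambda>\<epsilon>. T \<epsilon> - I + I) \<longlongrightarrow> 0 + I) (at_right 0)" by (intro tendsto_add tendsto_const)
  hence "(T \<longlongrightarrow> I) (at_right 0)" by simp
  hence "hilbert g \<xi> = I" unfolding HT by (intro tendsto_Lim) auto
  also have "norm I \<le> (LINT \<mu>|lborel. norm (indicator {0<..} \<mu> *\<^sub>R D \<mu>))" unfolding I_def by (rule integral_norm_bound)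
  also have "\<dots> \<le> (LINT \<mu>|lborel. B \<mu>)"
  proof (rule integral_mono[OF integrable_norm[OF DI[of 0]] Bint])
    fix \<mu> :: real
    show "norm (indicator {0<..} \<mu> *\<^sub>R D \<mu>) \<le> B \<mu>" by (rule DB) simp
  qed simp
  finally show ?thesis unfolding Bval .
qed



lemma cutoff_schwartz:
  assumes c: "cutoff \<phi>"
  shows "schwartz (\<lambda>t. complex_of_real (\<phi> t))"
proof -
  have sm: "iter_deriv k \<phi> differentiable (at x)" for k x
    using c unfolding cutoff_def smooth_real_def by blast
  have hd: "(iter_deriv k \<phi> has_real_derivative iter_deriv (Suc k) \<phi> x) (at x)" for k x
    using vector_derivative_works[THEN iffD1, OF sm[of k x]]
    by (simp add: has_real_derivative_iff_has_vector_derivative)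
  have eq: "iter_deriv k (\<lambda>t. complex_of_real (\<phi> t)) = (\<lambda>t. complex_of_real (iter_deriv k \<phi> t))" for k
  proof (induction k)
    case (Suc k)
    show ?case
    proof
      fix x
      have "iter_deriv (Suc k) (\<lambda>t. complex_of_real (\<phi> t)) x
          = vector_derivative (\<lambda>t. complex_of_real (iter_deriv k \<phi> t)) (at x)"
        using Suc.IH by simp
      also have "\<dots> = complex_of_real (iter_deriv (Suc k) \<phi> x)"
        by (rule vector_derivative_at[OF has_vector_derivative_of_real[OF hd]])
      finally show "iter_deriv (Suc k) (\<lambda>t. complex_of_real (\<phi> t)) x = complex_of_real (iter_deriv (Suc k) \<phi> x)" .
    qed
  qed simp
  have smooth: "smooth_real (\<lambda>t. complex_of_real (\<phi> t))"
    unfolding smooth_real_def eq using has_vector_derivative_of_real[OF hd] by (blast intro: differentiableI_vector)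
  have zero: "iter_deriv k \<phi> x = 0" if "2 < \<bar>x\<bar>" for k x
    using that
  proof (induction k arbitrary: x)
    case 0 thus ?case using c unfolding cutoff_def by simp
  next
    case (Suc k)
    have op: "open {y::real. 2 < \<bar>y\<bar>}" by (intro open_Collect_less continuous_intros)
    have "((\<lambda>_. 0) has_vector_derivative (0::real)) (at x)" by simp
    hence "(iter_deriv k \<phi> has_vector_derivative 0) (at x)"
      by (rule has_vector_derivative_transform_within_open[where S = "{y. 2 < \<bar>y\<bar>}"])
         (use Suc op in auto)
    thus ?case by (simp add: vector_derivative_at)
  qed
  have bd: "\<exists>C. \<forall>x. \<bar>x\<bar> ^ m * norm (iter_deriv k (\<lambda>t. complex_of_real (\<phi> t)) x) \<le> C" for m k
  proof -
    have "continuous_on {-2..2} (iter_deriv k \<phi>)"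
      using sm by (meson continuous_at_imp_continuous_on differentiable_imp_continuous_within)
    hence "bounded (iter_deriv k \<phi> ` {-2..2})" by (intro compact_imp_bounded compact_continuous_image) auto
    then obtain B where B: "\<And>x. x \<in> {-2..2} \<Longrightarrow> \<bar>iter_deriv k \<phi> x\<bar> \<le> B"
      unfolding bounded_iff by (auto simp del: atLeastAtMost_iff)
    have B0: "0 \<le> B" using B[of 0] by simp
    show ?thesis
    proof (intro exI allI)
      fix x :: real
      show "\<bar>x\<bar> ^ m * norm (iter_deriv k (\<lambda>t. complex_of_real (\<phi> t)) x) \<le> 2 ^ m * B"
      proof (cases "\<bar>x\<bar> \<le> 2")
        case True
        have "\<bar>x\<bar> ^ m * \<bar>iter_deriv k \<phi> x\<bar> \<le> 2 ^ m * B"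
        proof (intro mult_mono power_mono)
          show "\<bar>iter_deriv k \<phi> x\<bar> \<le> B" using True by (intro B) (simp add: abs_le_iff)
        qed (use True in auto)
        thus ?thesis unfolding eq by simp
      next
        case False
        thus ?thesis unfolding eq using zero[of x k] B0 by simp
      qed
    qed
  qed
  show ?thesis unfolding schwartz_def using smooth bd by blast
qed



lemma lip_cont:
  fixes g :: "real \<Rightarrow> complex"
  assumes lip: "\<And>a b. \<bar>a - b\<bar> \<le> 1 \<Longrightarrow> norm (g a - g b) \<le> L * \<bar>a - b\<bar> / jbr a"
  shows "continuous_on UNIV g"
proof -
  have "isCont g a" for a
  proof -
    have "((\<lambda>b. g b - g a) \<longlongrightarrow> 0) (at a)"
    proof (rule Lim_null_comparison)
      show "\<forall>\<^sub>F b in at a. norm (g b - g a) \<le> \<bar>L\<bar> * \<bar>b - a\<bar>"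
        unfolding eventually_at
      proof (intro exI[of _ 1] conjI ballI impI)
        fix b assume "b \<noteq> a \<and> dist b a < 1"
        hence ab: "\<bar>a - b\<bar> \<le> 1" by (simp add: dist_real_def abs_minus_commute)
        have "norm (g b - g a) = norm (g a - g b)" by (rule norm_minus_commute)
        also have "\<dots> \<le> L * \<bar>a - b\<bar> / jbr a" by (rule lip[OF ab])
        also have "\<dots> \<le> \<bar>L\<bar> * \<bar>a - b\<bar> / jbr a" by (intro divide_right_mono mult_right_mono) (auto intro: less_imp_le jbr_pos)
        also have "\<dots> \<le> \<bar>L\<bar> * \<bar>a - b\<bar> / 1"
          using jbr_ge1[of a] by (intro divide_left_mono) auto
        finally show "norm (g b - g a) \<le> \<bar>L\<bar> * \<bar>b - a\<bar>" by (simp add: abs_minus_commute)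
      qed simp
      show "((\<lambda>b. \<bar>L\<bar> * \<bar>b - a\<bar>) \<longlongrightarrow> 0) (at a)"
        by (rule tendsto_eq_intros refl tendsto_ident_at)+ simp
    qed
    thus ?thesis unfolding isCont_def by (simp add: LIM_zero_iff)
  qed
  thus ?thesis by (simp add: continuous_on_eq_continuous_at)
qed

lemma four_bounds:
  assumes S: "schwartz f"
  shows "\<exists>M H. \<forall>y. norm (fourier f y) \<le> M / (1 + y\<^sup>2)\<^sup>2 \<and> norm (hilbert (fourier f) y) \<le> H / jbr y"
proof -
  obtain M where M: "\<And>y. norm (fourier f y) \<le> M / (1 + y\<^sup>2)\<^sup>2" using sch_fourier_decay[OF S] by blast
  obtain L where L: "\<And>a b. \<bar>a - b\<bar> \<le> 1 \<Longrightarrow> norm (fourier f a - fourier f b) \<le> L * \<bar>a - b\<bar> / jbr a"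
    using sch_fourier_lip[OF S] by blast
  have "norm (hilbert (fourier f) y) \<le> (2*L + 8*M*pi) / jbr y" for y
    by (rule hilbert_bound[OF lip_cont[OF L] M L])
  thus ?thesis using M by blast
qed

lemma inv_sq_le_jbr: "0 \<le> M \<Longrightarrow> M / (1 + y\<^sup>2)\<^sup>2 \<le> M / jbr y"
proof -
  assume M: "0 \<le> M"
  have "jbr y \<le> 1 + y\<^sup>2" by (rule jbr_le_sq)
  also have "\<dots> \<le> (1 + y\<^sup>2)\<^sup>2" using mult_left_mono[of 1 "1+y\<^sup>2" "1+y\<^sup>2"] by (simp add: power2_eq_square)
  moreover have q: "0 < (1+y\<^sup>2)\<^sup>2" using zero_le_power2[of y] by (intro zero_less_power) linarith
  ultimately show ?thesis using M jbr_pos[of y] by (intro divide_left_mono) auto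
qed

lemma minle: "0 \<le> (c::real) \<Longrightarrow> w \<le> c * a \<Longrightarrow> w \<le> c * b \<Longrightarrow> w \<le> c * min a b"
  by (simp add: min_def)

lemma jbr_minus: "jbr (- x) = jbr x" by (simp add: jbr_def)

lemma inv_jbr_shift: "1 / jbr x \<le> 2 * jbr (y - x) / jbr y"
proof -
  have "jbr y \<le> 2 * jbr (y - x) * jbr x" using jbr_peetre[of "y - x" x] by simp
  thus ?thesis using jbr_pos[of x] jbr_pos[of y] by (simp add: field_simps)
qed

lemma W_bound:
  fixes \<Phi> :: int and \<mu> \<tau> :: real
  assumes "\<Phi> \<noteq> 0"
  shows "1 / (\<bar>of_int \<Phi>\<bar> * jbr (\<mu> / of_int \<Phi>)) \<le> 2 * jbr (\<tau> - \<mu>) * min (1 / jbr (of_int \<Phi>)) (1 / jbr \<tau>)"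
proof -
  define p where "p = (of_int \<Phi> :: real)"
  have p1: "1 \<le> \<bar>p\<bar>" unfolding p_def using assms by linarith
  hence pp: "1 \<le> p\<^sup>2" by (metis abs_ge_self abs_le_square_iff abs_one le_less_trans linorder_not_le one_power2 order.refl power2_abs)
  have eq: "\<bar>p\<bar> * jbr (\<mu> / p) = sqrt (p\<^sup>2 + \<mu>\<^sup>2)"
  proof -
    have "\<bar>p\<bar> * jbr (\<mu> / p) = sqrt (p\<^sup>2) * sqrt (1 + (\<mu> / p)\<^sup>2)" unfolding jbr_def by simp
    also have "\<dots> = sqrt (p\<^sup>2 * (1 + (\<mu> / p)\<^sup>2))" by (simp add: real_sqrt_mult)
    also have "p\<^sup>2 * (1 + (\<mu> / p)\<^sup>2) = p\<^sup>2 + \<mu>\<^sup>2" using p1 by (auto simp: field_simps power2_eq_square)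
    finally show ?thesis .
  qed
  have s1: "jbr \<mu> \<le> sqrt (p\<^sup>2 + \<mu>\<^sup>2)" unfolding jbr_def using pp by simp
  have s2: "jbr p / 2 \<le> sqrt (p\<^sup>2 + \<mu>\<^sup>2)"
  proof -
    have "jbr p / 2 \<le> \<bar>p\<bar>" using jbr_le_2abs[OF p1] by simp
    also have "\<bar>p\<bar> = sqrt (p\<^sup>2)" by simp
    also have "\<dots> \<le> sqrt (p\<^sup>2 + \<mu>\<^sup>2)" by simp
    finally show ?thesis .
  qed
  have jm: "0 < jbr \<mu>" "0 < jbr p" "1 \<le> jbr (\<tau> - \<mu>)" using jbr_pos jbr_ge1 by auto
  have sp: "0 < sqrt (p\<^sup>2 + \<mu>\<^sup>2)" using s2 jm by linarith
  have W1: "1 / sqrt (p\<^sup>2 + \<mu>\<^sup>2) \<le> 2 * jbr (\<tau> - \<mu>) * (1 / jbr p)"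
  proof -
    have "1 / sqrt (p\<^sup>2 + \<mu>\<^sup>2) \<le> 1 / (jbr p / 2)" using s2 jm sp by (intro divide_left_mono) auto
    also have "\<dots> = 2 * 1 * (1 / jbr p)" by simp
    also have "\<dots> \<le> 2 * jbr (\<tau> - \<mu>) * (1 / jbr p)" using jm by (intro mult_right_mono mult_left_mono) auto
    finally show ?thesis .
  qed
  have W2: "1 / sqrt (p\<^sup>2 + \<mu>\<^sup>2) \<le> 2 * jbr (\<tau> - \<mu>) * (1 / jbr \<tau>)"
  proof -
    have "1 / sqrt (p\<^sup>2 + \<mu>\<^sup>2) \<le> 1 / jbr \<mu>" using s1 jm sp by (intro divide_left_mono) auto
    also have "\<dots> \<le> 2 * jbr (\<tau> - \<mu>) / jbr \<tau>" by (rule inv_jbr_shift)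
    finally show ?thesis by simp
  qed
  show ?thesis unfolding p_def[symmetric] eq using W1 W2 jm by (intro minle) auto
qed

lemma kernel_aux:
  fixes \<Phi> :: int and \<mu> \<tau> lam :: real
  assumes "\<Phi> \<noteq> 0"
  shows "1 / (1 + (\<tau> - \<mu>)\<^sup>2)\<^sup>2 * (1 / jbr (\<mu> - lam)) * (1 / (\<bar>of_int \<Phi>\<bar> * jbr (\<mu> / of_int \<Phi>)))
     \<le> 4 * inverse (1 + (\<tau> - \<mu>)\<^sup>2) * (1 / jbr (\<tau> - lam) * min (1 / jbr (of_int \<Phi>)) (1 / jbr \<tau>))"
proof -
  define X where "X = jbr (\<tau> - \<mu>)"
  define m where "m = min (1 / jbr (of_int \<Phi>)) (1 / jbr \<tau>)"
  have X: "X\<^sup>2 = 1 + (\<tau> - \<mu>)\<^sup>2" "0 < X" unfolding X_def by (auto simp: jbr_sq jbr_pos)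
  have m: "0 \<le> m" unfolding m_def using jbr_pos[of \<tau>] jbr_pos[of "of_int \<Phi>"] by simp
  have a: "1 / jbr (\<mu> - lam) \<le> 2 * X / jbr (\<tau> - lam)" unfolding X_def using inv_jbr_shift[of "\<mu> - lam" "\<tau> - lam"] by simp
  have b: "1 / (\<bar>of_int \<Phi>\<bar> * jbr (\<mu> / of_int \<Phi>)) \<le> 2 * X * m" unfolding X_def m_def by (rule W_bound[OF assms])
  have "1 / (1 + (\<tau> - \<mu>)\<^sup>2)\<^sup>2 * (1 / jbr (\<mu> - lam)) * (1 / (\<bar>of_int \<Phi>\<bar> * jbr (\<mu> / of_int \<Phi>)))
      \<le> 1 / (1 + (\<tau> - \<mu>)\<^sup>2)\<^sup>2 * (2 * X / jbr (\<tau> - lam)) * (2 * X * m)"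
    using a b jbr_pos[of "\<mu> - lam"] jbr_pos[of "\<mu> / of_int \<Phi>"] X(2) jbr_pos[of "\<tau> - lam"]
    by (intro mult_mono mult_left_mono) (auto simp: add_pos_nonneg)
  also have "\<dots> = 4 * X\<^sup>2 / (X\<^sup>2)\<^sup>2 * (1 / jbr (\<tau> - lam) * m)" unfolding X(1)[symmetric]
    by (simp add: power2_eq_square)
  also have "\<dots> = 4 * inverse (X\<^sup>2) * (1 / jbr (\<tau> - lam) * m)"
    using X(2) by (simp add: power2_eq_square field_simps)
  also have "\<dots> = 4 * inverse (1 + (\<tau> - \<mu>)\<^sup>2) * (1 / jbr (\<tau> - lam) * m)"
    unfolding X(1) ..
  finally show ?thesis unfolding m_def .
qed



lemma prod4_le:
  fixes a b c d A B C D :: real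
  assumes "0 \<le> a" "a \<le> A" "0 \<le> b" "b \<le> B" "0 \<le> c" "c \<le> C" "0 \<le> d" "d \<le> D"
  shows "a * b * c * d \<le> A * B * C * D"
  using assms by (intro mult_mono) (auto intro: mult_nonneg_nonneg order_trans)

lemma first_term:
  fixes p \<tau> lam \<alpha> :: real
  assumes "2 \<le> \<alpha>"
  shows "1 / jbr (\<tau> - lam) powr \<alpha> * min (1 / jbr p) (1 / jbr lam)
    \<le> 2 * (1 / jbr (\<tau> - lam) * min (1 / jbr p) (1 / jbr \<tau>))"
proof -
  define x where "x = jbr (\<tau> - lam)"
  define m where "m = min (1 / jbr p) (1 / jbr \<tau>)"
  have x: "1 \<le> x" unfolding x_def by (rule jbr_ge1)
  have m: "0 \<le> m" unfolding m_def using jbr_pos[of p] jbr_pos[of \<tau>] by simp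
  have "x powr 2 \<le> x powr \<alpha>" using x assms by (intro powr_mono) auto
  hence px: "x\<^sup>2 \<le> x powr \<alpha>" using x by (simp add: powr_numeral)
  have xp: "0 < x\<^sup>2" using x by simp
  have "1 / x powr \<alpha> \<le> 1 / x\<^sup>2" using px xp by (intro divide_left_mono) auto
  moreover have "min (1 / jbr p) (1 / jbr lam) \<le> 2 * x * m" unfolding m_def
  proof (intro minle)
    have "1 / jbr p = 2 * 1 * (1 / jbr p) / 2" by simp
    show "min (1 / jbr p) (1 / jbr lam) \<le> 2 * x * (1 / jbr p)"
      using x jbr_pos[of p] mult_right_mono[of 1 "2*x" "1 / jbr p"] by (simp add: min_le_iff_disj)
    show "min (1 / jbr p) (1 / jbr lam) \<le> 2 * x * (1 / jbr \<tau>)"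
      using inv_jbr_shift[of lam \<tau>] unfolding x_def by (simp add: min_le_iff_disj)
  qed (use x in simp)
  moreover have "0 \<le> min (1 / jbr p) (1 / jbr lam)" using jbr_pos[of p] jbr_pos[of lam] by simp
  ultimately have "1 / x powr \<alpha> * min (1 / jbr p) (1 / jbr lam) \<le> 1 / x\<^sup>2 * (2 * x * m)"
    using xp by (intro mult_mono) auto
  also have "\<dots> = 2 * (1 / x * m)" using x by (simp add: power2_eq_square field_simps)
  finally show ?thesis unfolding x_def m_def .
qed



theorem mainTheorem8:
  fixes \<eta> :: "real \<Rightarrow> complex" and \<phi> :: "real \<Rightarrow> real"
  assumes "schwartz \<eta>" and "cutoff \<phi>"
  shows "\<exists>\<alpha>\<^sub>0>0. \<forall>\<alpha>\<ge>\<alpha>\<^sub>0. \<exists>C>0. \<forall>\<tau> lam (\<Phi>::int). \<Phi> \<noteq> 0 \<longrightarrow>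
     (let A = 1 / jbr (\<tau> - lam) powr \<alpha> * min (1 / jbr (of_int \<Phi>)) (1 / jbr lam)
            + 1 / jbr (\<tau> - lam) * min (1 / jbr (of_int \<Phi>)) (1 / jbr \<tau>);
          B = 1 / jbr (\<tau> - lam) * min (1 / jbr (of_int \<Phi>)) (1 / jbr \<tau>)
      in cmod (KG \<phi> \<eta> \<tau> lam \<Phi>) \<le> C * A \<and> A \<le> C * B)"
proof -
  define Fp where "Fp = fourier (\<lambda>t. complex_of_real (\<phi> t))"
  define Fe where "Fe = fourier \<eta>"
  have Sp: "schwartz (\<lambda>t. complex_of_real (\<phi> t))" by (rule cutoff_schwartz[OF assms(2)])
  obtain Mp Hp where bp: "\<And>y. norm (Fp y) \<le> Mp / (1 + y\<^sup>2)\<^sup>2" "\<And>y. norm (hilbert Fp y) \<le> Hp / jbr y"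
    using four_bounds[OF Sp] unfolding Fp_def by blast
  obtain Me He where be: "\<And>y. norm (Fe y) \<le> Me / (1 + y\<^sup>2)\<^sup>2" "\<And>y. norm (hilbert Fe y) \<le> He / jbr y"
    using four_bounds[OF assms(1)] unfolding Fe_def by blast
  have j0: "jbr 0 = 1" by (simp add: jbr_def)
  have Mp: "0 \<le> Mp" using bp(1)[of 0] norm_ge_zero[of "Fp 0"] by simp (meson norm_ge_zero order_trans)
  have Me: "0 \<le> Me" using be(1)[of 0] norm_ge_zero[of "Fe 0"] by simp (meson norm_ge_zero order_trans)
  have Hp: "0 \<le> Hp" using bp(2)[of 0] j0 by simp (meson norm_ge_zero order_trans)
  have He: "0 \<le> He" using be(2)[of 0] j0 by simp (meson norm_ge_zero order_trans)
  define K where "K = max (max Mp Me) (max Hp He)"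
  have K0: "0 \<le> K" unfolding K_def using Mp by simp
  have K1: "norm (Fp y) \<le> K / (1 + y\<^sup>2)\<^sup>2" for y
    using bp(1)[of y] by (rule order_trans) (intro divide_right_mono, auto simp: K_def)
  have K1': "norm (Fp y) \<le> K / jbr y" for y
    using K1[of y] inv_sq_le_jbr[OF K0, of y] by linarith
  have K2: "norm (hilbert Fp y) \<le> K / jbr y" for y
    using bp(2)[of y] by (rule order_trans) (intro divide_right_mono, auto simp: K_def intro: less_imp_le jbr_pos)
  have K3: "norm (Fe y) \<le> K / jbr y" for y
  proof -
    have "norm (Fe y) \<le> Me / jbr y" using be(1)[of y] inv_sq_le_jbr[OF Me, of y] by linarith
    also have "\<dots> \<le> K / jbr y" by (intro divide_right_mono) (auto simp: K_def intro: less_imp_le jbr_pos)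
    finally show ?thesis .
  qed
  have K4: "norm (hilbert Fe y) \<le> K / jbr y" for y
    using be(2)[of y] by (rule order_trans) (intro divide_right_mono, auto simp: K_def intro: less_imp_le jbr_pos)
  define Bv where "Bv \<tau> lam \<Phi> = 1 / jbr (\<tau> - lam) * min (1 / jbr (of_int \<Phi>)) (1 / jbr \<tau>)" for \<tau> lam :: real and \<Phi> :: int
  have Bv0: "0 \<le> Bv \<tau> lam \<Phi>" for \<tau> lam \<Phi>
    unfolding Bv_def using jbr_pos[of "\<tau> - lam"] jbr_pos[of \<tau>] jbr_pos[of "of_int \<Phi>"] by simp
  have main: "norm (KG \<phi> \<eta> \<tau> lam \<Phi>) \<le> 8 * K^3 * pi * Bv \<tau> lam \<Phi>" if "\<Phi> \<noteq> 0" for \<tau> lam \<Phi>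
  proof -
    define f where "f \<mu> = Fp (\<tau> - \<mu>) * Fp (\<mu> - lam) * (1 / of_int \<Phi>) * hilbert Fe (\<mu> / of_int \<Phi>)
        + Fp (\<tau> - \<mu>) * hilbert Fp (\<mu> - lam) * (1 / of_int \<Phi>) * Fe (\<mu> / of_int \<Phi>)" for \<mu>
    have KGf: "KG \<phi> \<eta> \<tau> lam \<Phi> = (LINT \<mu>|lborel. f \<mu>)" unfolding KG_def f_def Fp_def Fe_def ..
    define Q where "Q \<mu> = K / (1 + (\<tau> - \<mu>)\<^sup>2)\<^sup>2 * (K / jbr (\<mu> - lam)) * (1 / \<bar>of_int \<Phi>\<bar>) * (K / jbr (\<mu> / of_int \<Phi>))" for \<mu>
    have Pabs: "0 < \<bar>(of_int \<Phi>::real)\<bar>" using that by simp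
    have nP: "norm (1 / (of_int \<Phi> :: complex)) = 1 / \<bar>of_int \<Phi>\<bar>"
      by (simp add: norm_divide)
    have t1: "norm (Fp (\<tau> - \<mu>) * Fp (\<mu> - lam) * (1 / of_int \<Phi>) * hilbert Fe (\<mu> / of_int \<Phi>)) \<le> Q \<mu>" for \<mu>
      unfolding norm_mult nP Q_def
      by (rule prod4_le) (use K1 K1' K4 in auto)
    have t2: "norm (Fp (\<tau> - \<mu>) * hilbert Fp (\<mu> - lam) * (1 / of_int \<Phi>) * Fe (\<mu> / of_int \<Phi>)) \<le> Q \<mu>" for \<mu>
      unfolding norm_mult nP Q_def
      by (rule prod4_le) (use K1 K2 K3 in auto)
    have Qb: "Q \<mu> \<le> 4 * K^3 * Bv \<tau> lam \<Phi> * inverse (1 + (\<tau> - \<mu>)\<^sup>2)" for \<mu>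
    proof -
      have "Q \<mu> = K^3 * (1 / (1 + (\<tau> - \<mu>)\<^sup>2)\<^sup>2 * (1 / jbr (\<mu> - lam)) * (1 / (\<bar>of_int \<Phi>\<bar> * jbr (\<mu> / of_int \<Phi>))))"
        unfolding Q_def by (simp add: power3_eq_cube field_simps)
      also have "\<dots> \<le> K^3 * (4 * inverse (1 + (\<tau> - \<mu>)\<^sup>2) * Bv \<tau> lam \<Phi>)"
        unfolding Bv_def using K0 by (intro mult_left_mono kernel_aux that) auto
      finally show ?thesis by (simp add: mult_ac)
    qed
    have fb: "norm (f \<mu>) \<le> 8 * K^3 * Bv \<tau> lam \<Phi> * inverse (1 + (\<tau> - \<mu>)\<^sup>2)" for \<mu>
    proof -
      have "norm (f \<mu>) \<le> Q \<mu> + Q \<mu>" unfolding f_def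
        by (rule order_trans[OF norm_triangle_ineq add_mono[OF t1 t2]])
      also have "\<dots> \<le> 8 * K^3 * Bv \<tau> lam \<Phi> * inverse (1 + (\<tau> - \<mu>)\<^sup>2)" using Qb[of \<mu>] by (simp add: mult_ac)
      finally show ?thesis .
    qed
    have gi: "integrable lborel (\<lambda>\<mu>. 8 * K^3 * Bv \<tau> lam \<Phi> * inverse (1 + (\<tau> - \<mu>)\<^sup>2))"
      using integrable_inv_shift(1) by (intro integrable_mult_right)
    have gv: "(LINT \<mu>|lborel. 8 * K^3 * Bv \<tau> lam \<Phi> * inverse (1 + (\<tau> - \<mu>)\<^sup>2)) = 8 * K^3 * pi * Bv \<tau> lam \<Phi>"
      using integral_inv_shift(1)[of \<tau>] by simp
    show ?thesis
    proof (cases "integrable lborel f")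
      case True
      have "norm (KG \<phi> \<eta> \<tau> lam \<Phi>) \<le> (LINT \<mu>|lborel. norm (f \<mu>))" unfolding KGf by (rule integral_norm_bound)
      also have "\<dots> \<le> (LINT \<mu>|lborel. 8 * K^3 * Bv \<tau> lam \<Phi> * inverse (1 + (\<tau> - \<mu>)\<^sup>2))"
        by (rule integral_mono[OF integrable_norm[OF True] gi fb])
      finally show ?thesis unfolding gv .
    next
      case False
      hence "KG \<phi> \<eta> \<tau> lam \<Phi> = 0" unfolding KGf by (rule not_integrable_integral_eq)
      thus ?thesis using K0 Bv0[of \<tau> lam \<Phi>] by simp
    qed
  qed
  define C where "C = 8 * K^3 * pi + 3"
  have KK: "0 \<le> 8 * K^3 * pi" using K0 by simp
  have C: "0 < C" "8 * K^3 * pi \<le> C" "3 \<le> C" unfolding C_def using KK by linarith+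
  show ?thesis
  proof (rule exI[of _ 2], intro conjI allI impI)
    fix \<alpha> :: real
    assume a: "2 \<le> \<alpha>"
    show "\<exists>C>0. \<forall>\<tau> lam (\<Phi>::int). \<Phi> \<noteq> 0 \<longrightarrow>
     (let A = 1 / jbr (\<tau> - lam) powr \<alpha> * min (1 / jbr (of_int \<Phi>)) (1 / jbr lam)
            + 1 / jbr (\<tau> - lam) * min (1 / jbr (of_int \<Phi>)) (1 / jbr \<tau>);
          B = 1 / jbr (\<tau> - lam) * min (1 / jbr (of_int \<Phi>)) (1 / jbr \<tau>)
      in cmod (KG \<phi> \<eta> \<tau> lam \<Phi>) \<le> C * A \<and> A \<le> C * B)"
  proof (rule exI[of _ C], intro conjI allI impI)
    fix \<tau> lam :: real and \<Phi> :: int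
    assume P: "\<Phi> \<noteq> 0"
    define t1 where "t1 = 1 / jbr (\<tau> - lam) powr \<alpha> * min (1 / jbr (of_int \<Phi>)) (1 / jbr lam)"
    have t10: "0 \<le> t1" unfolding t1_def using jbr_pos[of lam] jbr_pos[of "of_int \<Phi>"] by simp
    have t1b: "t1 \<le> 2 * Bv \<tau> lam \<Phi>" unfolding t1_def Bv_def by (rule first_term[OF a])
    have B0: "0 \<le> Bv \<tau> lam \<Phi>" by (rule Bv0)
    have "norm (KG \<phi> \<eta> \<tau> lam \<Phi>) \<le> C * (t1 + Bv \<tau> lam \<Phi>)"
    proof -
      have "norm (KG \<phi> \<eta> \<tau> lam \<Phi>) \<le> 8 * K^3 * pi * Bv \<tau> lam \<Phi>" by (rule main[OF P])
      also have "\<dots> \<le> C * Bv \<tau> lam \<Phi>" using C B0 by (intro mult_right_mono) auto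
      also have "\<dots> \<le> C * (t1 + Bv \<tau> lam \<Phi>)" using C t10 by (intro mult_left_mono) auto
      finally show ?thesis .
    qed
    moreover have "t1 + Bv \<tau> lam \<Phi> \<le> C * Bv \<tau> lam \<Phi>"
    proof -
      have "t1 + Bv \<tau> lam \<Phi> \<le> 3 * Bv \<tau> lam \<Phi>" using t1b by simp
      also have "\<dots> \<le> C * Bv \<tau> lam \<Phi>" using C B0 by (intro mult_right_mono) auto
      finally show ?thesis .
    qed
    ultimately show "let A = 1 / jbr (\<tau> - lam) powr \<alpha> * min (1 / jbr (of_int \<Phi>)) (1 / jbr lam)
            + 1 / jbr (\<tau> - lam) * min (1 / jbr (of_int \<Phi>)) (1 / jbr \<tau>);
          B = 1 / jbr (\<tau> - lam) * min (1 / jbr (of_int \<Phi>)) (1 / jbr \<tau>)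
      in cmod (KG \<phi> \<eta> \<tau> lam \<Phi>) \<le> C * A \<and> A \<le> C * B"
      unfolding Let_def t1_def Bv_def by simp
  qed (use C in auto)
  qed simp
qed


end
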